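(* Let $\lambda>2/\sqrt3$ and let $\mathcal M_2$ be a set of $2$ or $3$ pairs $ab$ of points of $\mathbb R^2$ such that all endpoints of all pairs are pairwise distinct, $\|a\|+\|b\|=\lambda\|a-b\|$ for every $ab\in\mathcal M_2$, and $o\in\operatorname{conv}\{\ell_{ab}: ab\in\mathcal M_2\}$, where $o$ is the origin. Let $G$ be the graph whose vertex set $V(G)$ is the set of all endpoints of pairs in $\mathcal M_2$, with blue edges $E_b(G)=\mathcal M_2$ and red edges $E_r(G)=\{xy: x,y\in V(G),\ \|x\|+\|y\|<\lambda\|x-y\|\}$. If there is a vertex $x\in V(G)$ such that $\angle(x,y)<2\pi/3$ for every $y\in V(G)\setminus\{x\}$, then $G$ contains an alternating cycle.
   Context: $\ell_{ab}=\dfrac{\|b\|}{\|a\|+\|b\|}a+\dfrac{\|a\|}{\|a\|+\|b\|}b$. $\angle(x,y)\in[0,\pi]$ denotes the smallest nonnegative angle between nonzero vectors $x,y$ (all vertices of $G$ are nonzero since $\lambda>1$). An alternating cycle is a simple cycle of even length in $G$ whose edges alternate between blue edges and red edges. *)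

theory Defs
  imports "HOL-Analysis.Analysis"
begin

type_synonym pt = "real^2"

definition vangle :: "pt \<Rightarrow> pt \<Rightarrow> real" where
  "vangle x y = arccos (inner x y / (norm x * norm y))"

definition ell :: "pt \<Rightarrow> pt \<Rightarrow> pt" where
  "ell a b = (norm b / (norm a + norm b)) *\<^sub>R a + (norm a / (norm a + norm b)) *\<^sub>R b"

text \<open>Graph G built from a matching M (set of unordered pairs, each a 2-element set).\<close>
definition vertices :: "pt set set \<Rightarrow> pt set" where
  "vertices M = \<Union>M"

definition blue_edges :: "pt set set \<Rightarrow> pt set set" where
  "blue_edges M = M"

definition red_edges :: "real \<Rightarrow> pt set set \<Rightarrow> pt set set" where
  "red_edges lam M = {{x, y} | x y. x \<in> vertices M \<and> y \<in> vertices M \<and>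
                        norm x + norm y < lam * norm (x - y)}"

definition alternating_cycle :: "pt set set \<Rightarrow> pt set set \<Rightarrow> pt list \<Rightarrow> bool" where
  "alternating_cycle B R vs \<longleftrightarrow>
     (let n = length vs in
       distinct vs \<and> n \<ge> 3 \<and> even n \<and>
       (\<forall>i<n. {vs ! i, vs ! ((i + 1) mod n)} \<in> B \<union> R) \<and>
       (\<forall>i<n. {vs ! i, vs ! ((i + 1) mod n)} \<in> B \<longleftrightarrow>
               {vs ! ((i + 1) mod n), vs ! ((i + 2) mod n)} \<in> R))"

end

theory Submission
  imports Defs
begin


lemma cos_le_half:
  fixes d :: real
  assumes "2*pi/3 \<le> \<bar>d\<bar>" "\<bar>d\<bar> \<le> 4*pi/3"
  shows "cos d \<le> -1/2"
proof -
  have cd: "cos d = cos \<bar>d\<bar>" by (simp add: abs_if)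
  show ?thesis
  proof (cases "\<bar>d\<bar> \<le> pi")
    case True
    have "cos \<bar>d\<bar> \<le> cos (2*pi/3)"
      by (rule cos_monotone_0_pi_le) (use assms True pi_gt_zero in linarith)+
    then show ?thesis using cd cos_120 by linarith
  next
    case False
    have "cos (2*pi - \<bar>d\<bar>) \<le> cos (2*pi/3)"
      by (rule cos_monotone_0_pi_le) (use assms False pi_gt_zero in linarith)+
    moreover have "cos (2*pi - \<bar>d\<bar>) = cos \<bar>d\<bar>"
      by (rule cos_2pi_minus)
    ultimately show ?thesis using cd cos_120 by linarith
  qed
qed

lemma red_real:
  fixes lam a b c D :: real
  assumes lam: "lam > 2 / sqrt 3" and a: "a > 0" and b: "b > 0" and c: "c \<le> -1/2"
    and D: "D\<^sup>2 = a\<^sup>2 + b\<^sup>2 - 2*a*b*c" and D0: "D \<ge> 0"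
  shows "a + b < lam * D"
proof -
  have s3: "sqrt 3 > 0" "sqrt 3 * sqrt 3 = 3" by auto
  have l1: "lam * sqrt 3 > 2" using lam s3 by (simp add: field_simps)
  have lp: "lam > 0" using l1 s3(1) by (smt (verit) mult_nonpos_nonneg)
  have "(lam * sqrt 3) * (lam * sqrt 3) > 2 * 2" using l1 by (intro mult_strict_mono) auto
  hence l2: "3 * (lam * lam) > 4" using s3 by (simp add: algebra_simps)
  have ab: "a*b > 0" using a b by simp
  have "-2*a*b*c \<ge> a*b" proof -
    have "a*b*(-2*c) \<ge> a*b*1" using ab c by (intro mult_left_mono) auto
    thus ?thesis by (simp add: algebra_simps)
  qed
  hence "D*D \<ge> a*a + b*b + a*b" using D by (simp add: power2_eq_square)
  moreover have "a*a + b*b \<ge> 2*a*b" proof -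
    have "0 \<le> (a-b)*(a-b)" by simp
    thus ?thesis by (simp add: algebra_simps)
  qed
  ultimately have h: "4 * (D*D) \<ge> 3 * ((a+b)*(a+b))" by (simp add: algebra_simps)
  have pos: "(a+b)*(a+b) > 0" using a b by simp
  have "4 * ((a+b)*(a+b)) < (3*(lam*lam)) * ((a+b)*(a+b))" using l2 pos by (simp add: mult_strict_right_mono)
  also have "\<dots> = (lam*lam) * (3 * ((a+b)*(a+b)))" by simp
  also have "\<dots> \<le> (lam*lam) * (4 * (D*D))" using h by (simp add: mult_left_mono)
  also have "\<dots> = 4 * ((lam*D)*(lam*D))" by (simp add: algebra_simps)
  finally have "(a+b)*(a+b) < (lam*D)*(lam*D)" by simp
  moreover have "lam*D \<ge> 0" using lp D0 by simp
  ultimately show ?thesis using a b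
    by (metis abs_of_nonneg abs_of_pos add_pos_pos abs_mult_self_eq power2_eq_square real_sqrt_abs real_sqrt_less_mono)
qed



definition Uv :: "pt \<Rightarrow> pt \<Rightarrow> real \<Rightarrow> pt" where
  "Uv X Y t = cos t *\<^sub>R X + sin t *\<^sub>R Y"

lemma Uv_inner:
  assumes "inner X X = 1" "inner Y Y = 1" "inner X Y = 0"
  shows "inner (Uv X Y a) (Uv X Y b) = cos (a - b)"
  using assms by (simp add: Uv_def inner_add_left inner_add_right inner_commute cos_diff algebra_simps)

lemma frame:
  fixes X :: pt
  assumes X: "norm X = 1"
  defines "Y \<equiv> vector [- X$2, X$1] :: pt"
  shows "inner X X = 1" "inner Y Y = 1" "inner X Y = 0"
    "\<And>w. w = inner w X *\<^sub>R X + inner w Y *\<^sub>R Y"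
proof -
  have n: "X$1 * X$1 + X$2 * X$2 = 1"
    using X by (simp add: norm_eq_sqrt_inner inner_vec_def sum_2)
  show "inner X X = 1" "inner Y Y = 1" "inner X Y = 0"
    using n by (simp_all add: Y_def inner_vec_def sum_2 algebra_simps)
  fix w :: pt
  have c1: "w$1 = (w$1*X$1+w$2*X$2)*X$1 + (w$1*(-X$2)+w$2*X$1)*(-X$2)"
  proof -
    have "(w$1*X$1+w$2*X$2)*X$1 + (w$1*(-X$2)+w$2*X$1)*(-X$2) = w$1*(X$1 * X$1 + X$2 * X$2)"
      by (simp add: algebra_simps)
    then show ?thesis using n by simp
  qed
  have c2: "w$2 = (w$1*X$1+w$2*X$2)*X$2 + (w$1*(-X$2)+w$2*X$1)*(X$1)"
  proof -
    have "(w$1*X$1+w$2*X$2)*X$2 + (w$1*(-X$2)+w$2*X$1)*(X$1) = w$2*(X$1 * X$1 + X$2 * X$2)"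
      by (simp add: algebra_simps)
    then show ?thesis using n by simp
  qed
  show "w = inner w X *\<^sub>R X + inner w Y *\<^sub>R Y"
    unfolding vec_eq_iff forall_2 using c1 c2
    by (simp add: Y_def inner_vec_def sum_2)
qed

lemma polar:
  fixes X v :: pt
  assumes X: "norm X = 1" and v: "v \<noteq> 0" and gt: "inner v X / norm v > -1/2"
  defines "Y \<equiv> vector [- X$2, X$1] :: pt"
  shows "\<exists>\<theta>. \<bar>\<theta>\<bar> < 2*pi/3 \<and> v = norm v *\<^sub>R Uv X Y \<theta>"
proof -
  note fr = frame[OF X, folded Y_def]
  define w where "w = v /\<^sub>R norm v"
  have nv: "norm v > 0" using v by simp
  have wn: "inner w w = 1" using nv by (simp add: w_def power2_norm_eq_inner[symmetric] norm_divide)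
  define p where "p = inner w X"
  define q where "q = inner w Y"
  have wd: "w = p *\<^sub>R X + q *\<^sub>R Y" using fr(4) unfolding p_def q_def by blast
  have pq: "p*p + q*q = 1"
  proof -
    have "inner w w = p*p*inner X X + 2*p*q*inner X Y + q*q*inner Y Y"
      by (subst (1 2) wd) (simp add: inner_add_left inner_add_right inner_commute algebra_simps)
    then show ?thesis using wn fr by simp
  qed
  have "p = inner v X / norm v" unfolding p_def w_def by (simp add: field_simps)
  hence pgt: "p > -1/2" using gt by simp
  have "p\<^sup>2 \<le> 1" using pq zero_le_square[of q] unfolding power2_eq_square by linarith
  hence "\<bar>p\<bar> \<le> 1" by (simp add: abs_square_le_1)
  hence pb: "-1 \<le> p" "p \<le> 1" by linarith+
  define \<theta> where "\<theta> = (if q \<ge> 0 then arccos p else - arccos p)"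
  have sa: "sin (arccos p) = \<bar>q\<bar>"
  proof -
    have "sin (arccos p) = sqrt (1 - p\<^sup>2)" using pb by (simp add: sin_arccos_abs)
    also have "1 - p\<^sup>2 = q\<^sup>2" using pq by (simp add: power2_eq_square)
    finally show ?thesis by simp
  qed
  have cs: "cos \<theta> = p" "sin \<theta> = q" using pb sa by (auto simp: \<theta>_def)
  have "arccos p < arccos (-(1/2))" by (rule arccos_less_arccos) (use pgt pb in auto)
  hence "\<bar>\<theta>\<bar> < 2*pi/3" using arccos_lbound[OF pb] by (auto simp: \<theta>_def)
  moreover have "v = norm v *\<^sub>R Uv X Y \<theta>"
  proof -
    have e1: "norm v *\<^sub>R w = v" using nv by (simp add: w_def)
    have "norm v *\<^sub>R w = norm v *\<^sub>R Uv X Y \<theta>" using cs by (subst wd) (simp add: Uv_def)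
    then show ?thesis using e1 by simp
  qed
  ultimately show ?thesis by blast
qed



lemma pairing_core:
  fixes tc td te tf p :: real
  shows "td \<le> tc \<Longrightarrow> tf \<le> te \<Longrightarrow> te-tf < 2*p/3 \<Longrightarrow> tc-td < 2*p/3 \<Longrightarrow> p \<le> (tc+td)/2-(te+tf)/2
    \<Longrightarrow> 2*p/3 \<le> tc-te \<and> 2*p/3 \<le> td-tf"
  by (simp add: field_simps)

lemma pairing:
  fixes tc td te tf :: real
  assumes "\<bar>tc - td\<bar> < 2*pi/3" "\<bar>te - tf\<bar> < 2*pi/3"
    "pi \<le> \<bar>(tc+td)/2 - (te+tf)/2\<bar>"
  shows "(2*pi/3 \<le> \<bar>tc-te\<bar> \<and> 2*pi/3 \<le> \<bar>td-tf\<bar>) \<or> (2*pi/3 \<le> \<bar>tc-tf\<bar> \<and> 2*pi/3 \<le> \<bar>td-te\<bar>)"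
proof -
  have h: "tc - td < 2*pi/3" "td - tc < 2*pi/3" "te - tf < 2*pi/3" "tf - te < 2*pi/3"
    using assms(1,2) unfolding abs_less_iff by linarith+
  have m: "pi \<le> (tc+td)/2 - (te+tf)/2 \<or> pi \<le> (te+tf)/2 - (tc+td)/2"
    using assms(3) by linarith
  have a1: "2*pi/3 \<le> \<bar>y\<bar>" if "2*pi/3 \<le> y" for y::real
    using that by linarith
  have a2: "2*pi/3 \<le> \<bar>y\<bar>" if "2*pi/3 \<le> -y" for y::real
    using that by linarith
  from m show ?thesis
  proof
    assume m: "pi \<le> (tc+td)/2 - (te+tf)/2"
    consider "tc \<ge> td" "te \<ge> tf" | "tc \<ge> td" "\<not> te \<ge> tf" | "\<not> tc \<ge> td" "te \<ge> tf" | "\<not> tc \<ge> td" "\<not> te \<ge> tf"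
      by blast
    then show ?thesis
    proof cases
      case 1
      have c: "2*pi/3 \<le> tc - te \<and> 2*pi/3 \<le> td - tf"
        by (rule pairing_core[where tc=tc and td=td and te=te and tf=tf]) (use 1 h m in \<open>simp add: field_simps\<close>)+
      then show ?thesis by (intro disjI1 conjI a1) (use c in simp)+
    next
      case 2
      have c: "2*pi/3 \<le> tc - tf \<and> 2*pi/3 \<le> td - te"
        by (rule pairing_core[where tc=tc and td=td and te=tf and tf=te]) (use 2 h m in \<open>simp add: field_simps\<close>)+
      then show ?thesis by (intro disjI2 conjI a1) (use c in simp)+
    next
      case 3
      have c: "2*pi/3 \<le> td - te \<and> 2*pi/3 \<le> tc - tf"
        by (rule pairing_core[where tc=td and td=tc and te=te and tf=tf]) (use 3 h m in \<open>simp add: field_simps\<close>)+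
      then show ?thesis by (intro disjI2 conjI a1) (use c in simp)+
    next
      case 4
      have c: "2*pi/3 \<le> td - tf \<and> 2*pi/3 \<le> tc - te"
        by (rule pairing_core[where tc=td and td=tc and te=tf and tf=te]) (use 4 h m in \<open>simp add: field_simps\<close>)+
      then show ?thesis by (intro disjI1 conjI a1) (use c in simp)+
    qed
  next
    assume m: "pi \<le> (te+tf)/2 - (tc+td)/2"
    consider "te \<ge> tf" "tc \<ge> td" | "\<not> te \<ge> tf" "tc \<ge> td" | "te \<ge> tf" "\<not> tc \<ge> td" | "\<not> te \<ge> tf" "\<not> tc \<ge> td"
      by blast
    then show ?thesis
    proof cases
      case 1
      have c: "2*pi/3 \<le> te - tc \<and> 2*pi/3 \<le> tf - td"
        by (rule pairing_core[where tc=te and td=tf and te=tc and tf=td]) (use 1 h m in \<open>simp add: field_simps\<close>)+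
      then show ?thesis by (intro disjI1 conjI a2) (use c in simp)+
    next
      case 2
      have c: "2*pi/3 \<le> tf - tc \<and> 2*pi/3 \<le> te - td"
        by (rule pairing_core[where tc=tf and td=te and te=tc and tf=td]) (use 2 h m in \<open>simp add: field_simps\<close>)+
      then show ?thesis by (intro disjI2 conjI a2) (use c in simp)+
    next
      case 3
      have c: "2*pi/3 \<le> te - td \<and> 2*pi/3 \<le> tf - tc"
        by (rule pairing_core[where tc=te and td=tf and te=td and tf=tc]) (use 3 h m in \<open>simp add: field_simps\<close>)+
      then show ?thesis by (intro disjI2 conjI a2) (use c in simp)+
    next
      case 4
      have c: "2*pi/3 \<le> tf - td \<and> 2*pi/3 \<le> te - tc"
        by (rule pairing_core[where tc=tf and td=te and te=td and tf=tc]) (use 4 h m in \<open>simp add: field_simps\<close>)+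
      then show ?thesis by (intro disjI1 conjI a2) (use c in simp)+
    qed
  qed
qed



lemma ell_sym: "ell a b = ell b a"
  by (simp add: ell_def add.commute)

lemma vert_nz:
  assumes "lam > 1" "\<forall>a b. {a, b} \<in> M \<longrightarrow> norm a + norm b = lam * norm (a - b)"
    "{a,b} \<in> M" "a \<noteq> b"
  shows "a \<noteq> 0"
proof
  assume a: "a = 0"
  have "norm a + norm b = lam * norm (a - b)" using assms(2,3) by blast
  hence "norm b = lam * norm b" using a by simp
  moreover have "norm b > 0" using a assms(4) by auto
  ultimately show False using assms(1) by simp
qed

lemma blue_not_red:
  assumes "\<forall>a b. {a, b} \<in> M \<longrightarrow> norm a + norm b = lam * norm (a - b)" "{a,b} \<in> M"
  shows "{a,b} \<notin> red_edges lam M"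
proof
  assume "{a,b} \<in> red_edges lam M"
  then obtain p q where pq: "{a,b} = {p,q}" "norm p + norm q < lam * norm (p - q)"
    unfolding red_edges_def by blast
  have "{p,q} \<in> M" using pq(1) assms(2) by simp
  then show False using assms(1) pq(2) by fastforce
qed

lemma red_in: "p \<in> vertices M \<Longrightarrow> q \<in> vertices M \<Longrightarrow> norm p + norm q < lam * norm (p - q)
   \<Longrightarrow> {p,q} \<in> red_edges lam M"
  unfolding red_edges_def by blast

lemma cycle4:
  assumes disj: "\<forall>e\<in>M. \<forall>f\<in>M. e \<noteq> f \<longrightarrow> e \<inter> f = {}"
    and M: "{c,d} \<in> M" "{e,f} \<in> M" "c \<noteq> d" "e \<noteq> f" "{c,d} \<noteq> {e,f}"
    and R: "{d,f} \<in> R" "{e,c} \<in> R" "{c,d} \<notin> R" "{e,f} \<notin> R"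
  shows "alternating_cycle M R [c,d,f,e]"
proof -
  have D: "{c,d} \<inter> {e,f} = {}" using disj[rule_format, OF M(1) M(2) M(5)] .
  have n1: "{d,f} \<notin> M"
  proof
    assume "{d,f} \<in> M"
    moreover have "{d,f} \<noteq> {c,d}" using D by auto
    ultimately have "{d,f} \<inter> {c,d} = {}" using disj M(1) by simp
    then show False by simp
  qed
  have n2: "{e,c} \<notin> M"
  proof
    assume "{e,c} \<in> M"
    moreover have "{e,c} \<noteq> {c,d}" using D by auto
    ultimately have "{e,c} \<inter> {c,d} = {}" using disj M(1) by simp
    then show False by simp
  qed
  have R': "{f,e} \<notin> R" using R(4) by (simp add: insert_commute)
  have M': "{f,e} \<in> M" using M(2) by (simp add: insert_commute)
  have all4: "\<And>P. (\<forall>i<(4::nat). P i) \<longleftrightarrow> P 0 \<and> P 1 \<and> P 2 \<and> P 3"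
    by (auto simp: less_Suc_eq numeral_eq_Suc)
  have L: "length [c,d,f,e] = 4" by simp
  have dist: "distinct [c,d,f,e]" using D M(3,4) by auto
  show ?thesis
    unfolding alternating_cycle_def Let_def L all4
    using dist M M' R R' n1 n2
    by (simp add: insert_commute)
qed

lemma inner_rep:
  assumes "v = n *\<^sub>R Uv X Y a" "inner X X = 1" "inner Y Y = 1" "inner X Y = 0"
  shows "inner v (Uv X Y m) = n * cos (a - m)"
  using assms by (simp add: Uv_inner)

lemma norm_U:
  assumes "inner X X = 1" "inner Y Y = 1" "inner X Y = 0"
  shows "norm (Uv X Y a) = 1"
  using Uv_inner[OF assms, of a a] by (simp add: norm_eq_sqrt_inner)

lemma normdiff_rep:
  assumes "v = n1 *\<^sub>R Uv X Y a" "w = n2 *\<^sub>R Uv X Y b" "inner X X = 1" "inner Y Y = 1" "inner X Y = 0"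
  shows "(norm (v - w))\<^sup>2 = n1\<^sup>2 + n2\<^sup>2 - 2*n1*n2*cos (a - b)"
proof -
  have u: "\<And>s t. inner (Uv X Y s) (Uv X Y t) = cos (s - t)" using Uv_inner assms(3-5) by blast
  have "(norm (v - w))\<^sup>2 = inner (v-w) (v-w)" by (simp add: power2_norm_eq_inner)
  also have "\<dots> = n1*n1*cos(a-a) - 2*n1*n2*cos(a-b) + n2*n2*cos(b-b)"
    using assms(1,2) by (simp add: inner_diff_left inner_diff_right u inner_commute[of "Uv X Y b"] algebra_simps cos_diff)
  finally show ?thesis by (simp add: power2_eq_square)
qed

lemma ell_rep:
  assumes "a = na *\<^sub>R Uv X Y s" "b = nb *\<^sub>R Uv X Y t" "na > 0" "nb > 0"
    "inner X X = 1" "inner Y Y = 1" "inner X Y = 0"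
  shows "inner (ell a b) (Uv X Y m) = (na*nb/(na+nb)) * (cos (s-m) + cos (t-m))"
proof -
  have nU: "\<And>r. norm (Uv X Y r) = 1" using norm_U assms(5-7) by blast
  have na: "norm a = na" using assms(1,3) nU by simp
  have nb: "norm b = nb" using assms(2,4) nU by simp
  have u: "\<And>s t. inner (Uv X Y s) (Uv X Y t) = cos (s - t)" using Uv_inner assms(5-7) by blast
  show ?thesis unfolding ell_def na nb using assms(1,2)
    by (simp add: inner_add_left u algebra_simps add_divide_distrib)
qed

lemma cos_sum_pos:
  assumes "\<bar>(s+t)/2 - m\<bar> < pi/2" "\<bar>(s-t)/2\<bar> < pi/2"
  shows "cos (s-m) + cos (t-m) > 0"
proof -
  have "cos (s-m) + cos (t-m) = 2 * cos (((s-m)+(t-m))/2) * cos (((s-m)-(t-m))/2)"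
    by (rule cos_plus_cos)
  also have "((s-m)+(t-m))/2 = (s+t)/2 - m" by simp
  also have "((s-m)-(t-m))/2 = (s-t)/2" by simp
  finally have e: "cos (s-m) + cos (t-m) = 2 * cos ((s+t)/2 - m) * cos ((s-t)/2)" .
  have "cos ((s+t)/2 - m) > 0" using assms(1) unfolding abs_less_iff by (intro cos_gt_zero_pi) linarith+
  moreover have "cos ((s-t)/2) > 0" using assms(2) unfolding abs_less_iff by (intro cos_gt_zero_pi) linarith+
  ultimately show ?thesis using e by simp
qed

lemma spread:
  fixes a b c :: real
  assumes "\<bar>a\<bar> < pi/3" "\<bar>b\<bar> < 2*pi/3" "\<bar>c\<bar> < 2*pi/3" "\<bar>b - c\<bar> < pi"
  shows "\<exists>m. \<bar>a - m\<bar> < pi/2 \<and> \<bar>b - m\<bar> < pi/2 \<and> \<bar>c - m\<bar> < pi/2"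
proof -
  have h: "-pi/3 < a" "a < pi/3" "-2*pi/3 < b" "b < 2*pi/3" "-2*pi/3 < c" "c < 2*pi/3"
    "b - c < pi" "c - b < pi"
    using assms unfolding abs_less_iff by linarith+
  have g: "\<exists>m. \<bar>a - m\<bar> < pi/2 \<and> \<bar>b - m\<bar> < pi/2 \<and> \<bar>c - m\<bar> < pi/2"
    if "lo \<le> a" "a \<le> hi" "lo \<le> b" "b \<le> hi" "lo \<le> c" "c \<le> hi" "hi - lo < pi" for lo hi
  proof -
    have "\<bar>a - (lo+hi)/2\<bar> < pi/2" "\<bar>b - (lo+hi)/2\<bar> < pi/2" "\<bar>c - (lo+hi)/2\<bar> < pi/2"
      using that unfolding abs_less_iff by (simp_all add: field_simps)
    then show ?thesis by blast
  qed
  consider "c \<le> a" "b \<le> a" | "a \<le> c" "a \<le> b" | "b \<le> a" "a \<le> c" | "c \<le> a" "a \<le> b"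
    by linarith
  then show ?thesis
  proof cases
    case 1
    then show ?thesis
    proof (cases "b \<le> c")
      case True then show ?thesis using 1 h by (intro g[of b a]) (simp_all add: field_simps)
    next
      case False then show ?thesis using 1 h by (intro g[of c a]) (simp_all add: field_simps)
    qed
  next
    case 2
    then show ?thesis
    proof (cases "b \<le> c")
      case True then show ?thesis using 2 h by (intro g[of a c]) (simp_all add: field_simps)
    next
      case False then show ?thesis using 2 h by (intro g[of a b]) (simp_all add: field_simps)
    qed
  next
    case 3 then show ?thesis using h by (intro g[of b c]) (simp_all add: field_simps)
  next
    case 4 then show ?thesis using h by (intro g[of c b]) (simp_all add: field_simps)
  qed
qed



theorem lemma2:
  fixes lam :: real and M :: "pt set set"
  assumes lam: "lam > 2 / sqrt 3"
    and card: "card M = 2 \<or> card M = 3"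
    and pairs: "\<forall>e\<in>M. \<exists>a b. a \<noteq> b \<and> e = {a, b}"
    and disj: "\<forall>e\<in>M. \<forall>f\<in>M. e \<noteq> f \<longrightarrow> e \<inter> f = {}"
    and eq: "\<forall>a b. {a, b} \<in> M \<longrightarrow> norm a + norm b = lam * norm (a - b)"
    and conv: "(0::pt) \<in> convex hull {ell a b | a b. {a, b} \<in> M}"
    and x: "x \<in> vertices M"
    and ang: "\<forall>y \<in> vertices M - {x}. vangle x y < 2 * pi / 3"
  shows "\<exists>vs. alternating_cycle (blue_edges M) (red_edges lam M) vs"
proof -
  define V where "V = vertices M"
  have s3: "sqrt 3 < 2" "sqrt 3 > 0"
  proof -
    have "sqrt 3 < sqrt 4" by (rule real_sqrt_less_mono) simp
    then show "sqrt 3 < 2" by simp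
  qed simp
  have lam1: "lam > 1"
  proof -
    have "2 / sqrt 3 > 1" using s3 by (simp add: field_simps)
    then show ?thesis using lam by linarith
  qed
  have finM: "finite M" using card by (metis card.infinite zero_neq_numeral)
  have inV: "\<And>a b. {a,b} \<in> M \<Longrightarrow> a \<in> V \<and> b \<in> V"
    unfolding V_def vertices_def by blast
  have nz: "v \<noteq> 0" if "v \<in> V" for v
  proof -
    from that obtain P where P: "P \<in> M" "v \<in> P" unfolding V_def vertices_def by blast
    then obtain a b where ab: "a \<noteq> b" "P = {a,b}" using pairs by blast
    show ?thesis
    proof (cases "v = a")
      case True then show ?thesis using vert_nz[OF lam1 eq, of a b] ab P by simp
    next
      case False
      then have "v = b" using ab P by simp
      moreover have "{b,a} \<in> M" using ab P by (simp add: insert_commute)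
      ultimately show ?thesis using vert_nz[OF lam1 eq, of b a] ab by simp
    qed
  qed
  obtain P1 where P1: "P1 \<in> M" "x \<in> P1" using x unfolding vertices_def by blast
  obtain x' where x': "P1 = {x,x'}" "x \<noteq> x'"
  proof -
    obtain a b where "a \<noteq> b" "P1 = {a,b}" using pairs P1 by blast
    then show ?thesis using that P1(2) by (auto simp: insert_commute)
  qed
  obtain P2 P3 where P23: "M = {P1,P2,P3}" "P2 \<in> M" "P3 \<in> M" "P2 \<noteq> P1" "P3 \<noteq> P1"
  proof -
    have cM: "card (M - {P1}) = card M - 1" using P1 finM by simp
    show ?thesis
    proof (cases "card M = 2")
      case True
      then have "card (M - {P1}) = 1" using cM by simp
      then obtain P2 where "M - {P1} = {P2}" by (meson card_1_singletonE)
      then have "M = {P1,P2,P2}" "P2 \<in> M" "P2 \<noteq> P1" using P1 by auto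
      then show ?thesis using that by blast
    next
      case False
      then have "card (M - {P1}) = 2" using cM card by simp
      then obtain P2 P3 where "M - {P1} = {P2,P3}" by (meson card_2_iff)
      then have "M = {P1,P2,P3}" "P2 \<in> M" "P3 \<in> M" "P2 \<noteq> P1" "P3 \<noteq> P1" using P1 by auto
      then show ?thesis using that by blast
    qed
  qed
  obtain c d where cd: "P2 = {c,d}" "c \<noteq> d" using pairs P23(2) by blast
  obtain e f where ef: "P3 = {e,f}" "e \<noteq> f" using pairs P23(3) by blast
  have M1: "{x,x'} \<in> M" using P1(1) x'(1) by simp
  have M2: "{c,d} \<in> M" using P23(2) cd(1) by simp
  have M3: "{e,f} \<in> M" using P23(3) ef(1) by simp
  have V: "x \<in> V" "x' \<in> V" "c \<in> V" "d \<in> V" "e \<in> V" "f \<in> V"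
    using inV[OF M1] inV[OF M2] inV[OF M3] by auto
  define X where "X = x /\<^sub>R norm x"
  define Y where "Y = (vector [- X$2, X$1] :: pt)"
  have xnz: "x \<noteq> 0" using nz V by simp
  have nX: "norm X = 1" using xnz by (simp add: X_def)
  note fr = frame[OF nX, folded Y_def]
  define U where "U = Uv X Y"
  have gt: "inner v X / norm v > -1/2" if "v \<in> V" "v \<noteq> x" for v
  proof -
    have vnz: "v \<noteq> 0" using nz that by simp
    define r where "r = inner x v / (norm x * norm v)"
    have r: "inner v X / norm v = r" unfolding r_def X_def using xnz vnz
      by (simp add: inner_commute field_simps)
    have "\<bar>inner x v\<bar> \<le> norm x * norm v" by (rule Cauchy_Schwarz_ineq2)
    hence rb: "-1 \<le> r" "r \<le> 1" using xnz vnz unfolding r_def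
      by (simp_all add: divide_le_eq le_divide_eq abs_le_iff)
    have "vangle x v < 2*pi/3" using ang that unfolding V_def by blast
    hence a: "arccos r < 2*pi/3" by (simp add: vangle_def r_def)
    show ?thesis
    proof (rule ccontr)
      assume "\<not> ?thesis"
      hence "r \<le> -(1/2)" using r by simp
      hence "arccos (-(1/2)) \<le> arccos r" using rb by (intro arccos_le_arccos) auto
      then show False using a by simp
    qed
  qed
  have "\<forall>v\<in>V - {x}. \<exists>\<theta>. \<bar>\<theta>\<bar> < 2*pi/3 \<and> v = norm v *\<^sub>R U \<theta>"
    using polar[OF nX, folded Y_def] gt nz unfolding U_def by blast
  then obtain th0 where th0: "\<forall>v\<in>V - {x}. \<bar>th0 v\<bar> < 2*pi/3 \<and> v = norm v *\<^sub>R U (th0 v)"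
    by metis
  define th where "th = th0(x := 0)"
  have th: "\<bar>th v\<bar> < 2*pi/3" "v = norm v *\<^sub>R U (th v)" if "v \<in> V" for v
  proof -
    show "\<bar>th v\<bar> < 2*pi/3" using th0 that by (cases "v = x") (auto simp: th_def)
    show "v = norm v *\<^sub>R U (th v)"
    proof (cases "v = x")
      case True
      then show ?thesis using xnz by (simp add: th_def U_def Uv_def X_def)
    next
      case False then show ?thesis using th0 that by (simp add: th_def)
    qed
  qed
  have thx: "th x = 0" by (simp add: th_def)
  have npos: "norm v > 0" if "v \<in> V" for v using nz that by simp
  have red: "{v,w} \<in> red_edges lam M" if "v \<in> V" "w \<in> V" "2*pi/3 \<le> \<bar>th v - th w\<bar>" for v w
  proof -
    have "\<bar>th v - th w\<bar> \<le> 4*pi/3" using th(1)[OF that(1)] th(1)[OF that(2)] by linarith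
    hence cle: "cos (th v - th w) \<le> -1/2" using cos_le_half that(3) by blast
    have nd: "(norm (v - w))\<^sup>2 = (norm v)\<^sup>2 + (norm w)\<^sup>2 - 2 * norm v * norm w * cos (th v - th w)"
      by (rule normdiff_rep[OF th(2)[OF that(1), unfolded U_def] th(2)[OF that(2), unfolded U_def] fr(1-3)])
    have "norm v + norm w < lam * norm (v - w)"
      by (rule red_real[OF lam npos[OF that(1)] npos[OF that(2)] cle nd]) simp
    then show ?thesis using red_in that unfolding V_def by blast
  qed
  have blue: "\<bar>th a - th b\<bar> < 2*pi/3" if "{a,b} \<in> M" for a b
  proof (rule ccontr)
    assume "\<not> ?thesis"
    hence "{a,b} \<in> red_edges lam M" using red inV[OF that] by simp
    then show False using blue_not_red[OF eq that] by simp
  qed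
  have Sdef: "{ell a b | a b. {a, b} \<in> M} = {ell x x', ell c d, ell e f}"
  proof (rule set_eqI, rule iffI)
    fix z assume "z \<in> {ell a b | a b. {a, b} \<in> M}"
    then obtain a b where z: "z = ell a b" "{a,b} \<in> M" by blast
    then have "{a,b} \<in> {{x,x'},{c,d},{e,f}}" using P23(1) x'(1) cd(1) ef(1) by simp
    then have "{a,b} = {x,x'} \<or> {a,b} = {c,d} \<or> {a,b} = {e,f}" by simp
    then show "z \<in> {ell x x', ell c d, ell e f}" using z(1)
      by (auto simp: doubleton_eq_iff ell_sym)
  next
    fix z assume "z \<in> {ell x x', ell c d, ell e f}"
    then show "z \<in> {ell a b | a b. {a, b} \<in> M}" using M1 M2 M3 by blast
  qed
  obtain u v w where uvw: "0 \<le> u" "0 \<le> v" "0 \<le> w" "u + v + w = 1"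
    "(0::pt) = u *\<^sub>R ell x x' + v *\<^sub>R ell c d + w *\<^sub>R ell e f"
    using conv unfolding Sdef convex_hull_3 by blast
  have ellpos: "inner (ell a b) (U m) > 0"
    if "{a,b} \<in> M" "\<bar>(th a + th b)/2 - m\<bar> < pi/2" for a b m
  proof -
    have ab: "a \<in> V" "b \<in> V" using inV[OF that(1)] by auto
    have e: "inner (ell a b) (U m) = (norm a * norm b / (norm a + norm b)) * (cos (th a - m) + cos (th b - m))"
      unfolding U_def
      by (rule ell_rep[OF th(2)[OF ab(1), unfolded U_def] th(2)[OF ab(2), unfolded U_def] npos[OF ab(1)] npos[OF ab(2)] fr(1-3)])
    have "\<bar>th a - th b\<bar> < pi" using blue[OF that(1)] pi_gt_zero by linarith
    hence "\<bar>(th a - th b)/2\<bar> < pi/2" by simp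
    hence "cos (th a - m) + cos (th b - m) > 0" using cos_sum_pos that(2) by blast
    moreover have "norm a * norm b / (norm a + norm b) > 0"
      using npos[OF ab(1)] npos[OF ab(2)] by (intro divide_pos_pos mult_pos_pos add_pos_pos)
    ultimately show ?thesis unfolding e by (rule mult_pos_pos[rotated])
  qed
  define m1 where "m1 = (th x + th x')/2"
  define m2 where "m2 = (th c + th d)/2"
  define m3 where "m3 = (th e + th f)/2"
  have big: "pi \<le> \<bar>m2 - m3\<bar>"
  proof (rule ccontr)
    assume "\<not> ?thesis"
    hence lt: "\<bar>m2 - m3\<bar> < pi" by simp
    have b1: "\<bar>m1\<bar> < pi/3" using th(1)[OF V(2)] thx unfolding m1_def by simp
    have b2: "\<bar>m2\<bar> < 2*pi/3" using th(1)[OF V(3)] th(1)[OF V(4)] unfolding m2_def abs_less_iff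
      by (simp add: field_simps)
    have b3: "\<bar>m3\<bar> < 2*pi/3" using th(1)[OF V(5)] th(1)[OF V(6)] unfolding m3_def abs_less_iff
      by (simp add: field_simps)
    obtain m where m: "\<bar>m1 - m\<bar> < pi/2" "\<bar>m2 - m\<bar> < pi/2" "\<bar>m3 - m\<bar> < pi/2"
      using spread[OF b1 b2 b3 lt] by blast
    have I1: "inner (ell x x') (U m) > 0" using ellpos[OF M1] m(1) unfolding m1_def by blast
    have I2: "inner (ell c d) (U m) > 0" using ellpos[OF M2] m(2) unfolding m2_def by blast
    have I3: "inner (ell e f) (U m) > 0" using ellpos[OF M3] m(3) unfolding m3_def by blast
    have "0 = inner (u *\<^sub>R ell x x' + v *\<^sub>R ell c d + w *\<^sub>R ell e f) (U m)"
      using uvw(5) by (metis inner_zero_left)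
    also have "\<dots> = u * inner (ell x x') (U m) + v * inner (ell c d) (U m) + w * inner (ell e f) (U m)"
      by (simp add: inner_add_left)
    finally have z: "0 = u * inner (ell x x') (U m) + v * inner (ell c d) (U m) + w * inner (ell e f) (U m)" .
    have "u * inner (ell x x') (U m) \<ge> 0" "v * inner (ell c d) (U m) \<ge> 0" "w * inner (ell e f) (U m) \<ge> 0"
      using uvw I1 I2 I3 by simp_all
    moreover have "u > 0 \<or> v > 0 \<or> w > 0" using uvw by linarith
    ultimately have "u * inner (ell x x') (U m) + v * inner (ell c d) (U m) + w * inner (ell e f) (U m) > 0"
      using I1 I2 I3 by (smt (verit) mult_pos_pos)
    then show False using z by simp
  qed
  have P23ne: "P2 \<noteq> P3"
  proof
    assume "P2 = P3"
    hence "{c,d} = {e,f}" using cd ef by simp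
    hence "m2 = m3" unfolding m2_def m3_def by (auto simp: doubleton_eq_iff add.commute)
    then show False using big pi_gt_zero by simp
  qed
  have D23: "{c,d} \<inter> {e,f} = {}" using disj[rule_format, OF P23(2) P23(3) P23ne] cd(1) ef(1) by simp
  have ne: "{c,d} \<noteq> {e,f}" using D23 cd by auto
  have nr: "{c,d} \<notin> red_edges lam M" "{e,f} \<notin> red_edges lam M" "{f,e} \<notin> red_edges lam M"
    using blue_not_red[OF eq M2] blue_not_red[OF eq M3] by (simp_all add: insert_commute)
  have M3': "{f,e} \<in> M" using M3 by (simp add: insert_commute)
  have ne': "{c,d} \<noteq> {f,e}" using ne by (simp add: insert_commute)
  have "(2*pi/3 \<le> \<bar>th c - th e\<bar> \<and> 2*pi/3 \<le> \<bar>th d - th f\<bar>) \<or> (2*pi/3 \<le> \<bar>th c - th f\<bar> \<and> 2*pi/3 \<le> \<bar>th d - th e\<bar>)"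
    by (rule pairing[OF blue[OF M2] blue[OF M3]]) (use big in \<open>simp add: m2_def m3_def\<close>)
  then show ?thesis
  proof
    assume h: "2*pi/3 \<le> \<bar>th c - th e\<bar> \<and> 2*pi/3 \<le> \<bar>th d - th f\<bar>"
    have r1: "{d,f} \<in> red_edges lam M" using red V h by simp
    have r2: "{e,c} \<in> red_edges lam M" using red[of e c] V h by (simp add: abs_minus_commute)
    show ?thesis unfolding blue_edges_def
      using cycle4[OF disj M2 M3 cd(2) ef(2) ne r1 r2 nr(1,2)] by blast
  next
    assume h: "2*pi/3 \<le> \<bar>th c - th f\<bar> \<and> 2*pi/3 \<le> \<bar>th d - th e\<bar>"
    have r1: "{d,e} \<in> red_edges lam M" using red V h by simp
    have r2: "{f,c} \<in> red_edges lam M" using red[of f c] V h by (simp add: abs_minus_commute)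
    show ?thesis unfolding blue_edges_def
      using cycle4[OF disj M2 M3' cd(2) ef(2)[symmetric] ne' r1 r2 nr(1,3)] by blast
  qed
qed

end
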